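(* Let $q\geq 3$ be odd and $A=(1/(\lambda+1),1]$. Then $\mu(\varphi_A>n)\sim n^{-1}$ as $n\to\infty$. Moreover, for every compact set $C\subseteq(0,1]$ there exists a measurable set $Y(C)\subseteq(0,1]$ with $C\subseteq Y(C)$ (namely $Y(C)=\bigcup_{k=0}^{N}F_q^{-k}(A)$ for suitable $N\in\mathbb{N}_0$) such that $\mu(\varphi_{Y(C)}>n)\sim n^{-1}$ as $n\to\infty$.
   Context: Let $q\geq 3$ be odd and $\lambda=2\cos(\pi/q)$. Elements of $\mathrm{PGL}_2(\mathbb{R})$ act on $\mathbb{R}\cup\{\infty\}$ by $\begin{bmatrix}a&b\\c&d\end{bmatrix}.x=(ax+b)/(cx+d)$. Put $s(x)=\sin(x\pi/q)/\sin(\pi/q)$, $g_k=\begin{bmatrix}s(k)&-s(k+1)\\-s(k-1)&s(k)\end{bmatrix}$, $Q=\begin{bmatrix}0&1\\1&0\end{bmatrix}$, $K=\{(q+1)/2,\dots,q-1\}$. The generalized Farey map $F_q\colon[0,1]\to[0,1]$ is $F_q(x)=g_k.x$ on $[g_k^{-1}.0,g_k^{-1}.1]$ and $F_q(x)=Qg_k.x$ on $[(Qg_k)^{-1}.1,(Qg_k)^{-1}.0]$, $k\in K$. $\mu$ is the measure on $[0,1]$ with density $1/x$ with respect to Lebesgue measure. For $Y\subseteq[0,1]$, the first return time map is $\varphi_Y\colon Y\to\mathbb{N}\cup\{\infty\}$, $\varphi_Y(x)=\inf\{n\in\mathbb{N}:F_q^n(x)\in Y\}$ ($\inf\emptyset=\infty$),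 and $\mu(\varphi_Y>n)=\mu(\{x\in Y:\varphi_Y(x)>n\})$. $a_n\sim b_n$ means $a_n/b_n\to 1$. *)

theory Defs
  imports "HOL-Analysis.Analysis" "HOL-Library.Extended_Nat" "HOL-Library.Landau_Symbols"
begin

text \<open>A 2x2 matrix [a b; c d] is represented as the tuple (a,b,c,d); its action on reals
  is the Moebius transformation x \<mapsto> (a x + b)/(c x + d).  All points used below have
  non-vanishing denominators, so no point at infinity is needed.\<close>

type_synonym mat2 = "real \<times> real \<times> real \<times> real"

definition mob :: "mat2 \<Rightarrow> real \<Rightarrow> real" where
  "mob M x = (case M of (a,b,c,d) \<Rightarrow> (a*x + b) / (c*x + d))"

text \<open>Inverse in PGL_2 (adjugate matrix).\<close>
definition minv :: "mat2 \<Rightarrow> mat2" where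
  "minv M = (case M of (a,b,c,d) \<Rightarrow> (d, -b, -c, a))"

text \<open>Left multiplication by Q = [0 1; 1 0].\<close>
definition Qmul :: "mat2 \<Rightarrow> mat2" where
  "Qmul M = (case M of (a,b,c,d) \<Rightarrow> (c, d, a, b))"

definition lam :: "nat \<Rightarrow> real" where
  "lam q = 2 * cos (pi / real q)"

definition sq :: "nat \<Rightarrow> real \<Rightarrow> real" where
  "sq q x = sin (x * pi / real q) / sin (pi / real q)"

definition gk :: "nat \<Rightarrow> nat \<Rightarrow> mat2" where
  "gk q k = (sq q (real k), - sq q (real k + 1), - sq q (real k - 1), sq q (real k))"

definition Kset :: "nat \<Rightarrow> nat set" where
  "Kset q = {(q+1) div 2 .. q - 1}"

text \<open>The generalized Farey map on [0,1]. On overlapping interval endpoints any of the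
  admissible branches is chosen (the branches agree there).\<close>
definition Farey :: "nat \<Rightarrow> real \<Rightarrow> real" where
  "Farey q x = (SOME y. \<exists>k\<in>Kset q.
      (x \<in> {mob (minv (gk q k)) 0 .. mob (minv (gk q k)) 1} \<and> y = mob (gk q k) x) \<or>
      (x \<in> {mob (minv (Qmul (gk q k))) 1 .. mob (minv (Qmul (gk q k))) 0} \<and>
        y = mob (Qmul (gk q k)) x))"

definition muF :: "real measure" where
  "muF = density lborel (\<lambda>x. ennreal (indicator {0<..1} x / x))"

definition return_time :: "(real \<Rightarrow> real) \<Rightarrow> real set \<Rightarrow> real \<Rightarrow> enat" where
  "return_time F Y x =
     (if \<exists>n\<ge>1. (F ^^ n) x \<in> Y then enat (LEAST n. n \<ge> 1 \<and> (F ^^ n) x \<in> Y) else \<infinity>)"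

definition tail_meas :: "(real \<Rightarrow> real) \<Rightarrow> real set \<Rightarrow> nat \<Rightarrow> real" where
  "tail_meas F Y n = measure muF {x \<in> Y. return_time F Y x > enat n}"

end

theory Submission
  imports Defs
begin

lemma int_inv: fixes u v :: real assumes "0 < u" "u \<le> v"
  shows "((\<lambda>x. 1 / x) has_integral (ln v - ln u)) {u..v}"
proof -
  have "((\<lambda>x. inverse x) has_integral (ln v - ln (u::real))) {u..v}"
    apply (rule fundamental_theorem_of_calculus[where f="ln :: real \<Rightarrow> real" and f'=inverse])
    using assms apply simp
    subgoal for x
      using assms by (auto intro!: has_real_derivative_iff_has_vector_derivative[THEN iffD1]
            DERIV_ln[THEN has_field_derivative_at_within])
    done
  thus ?thesis by (simp add: inverse_eq_divide)
qed
lemma emeasure_muF_Icc: fixes u v :: real assumes "0 < u" "u \<le> v" "v \<le> 1"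
  shows "emeasure muF {u..v} = ennreal (ln v - ln u)"
proof -
  have "emeasure muF {u..v} = (\<integral>\<^sup>+ x. ennreal (indicator {0<..1} x / x) * indicator {u..v} x \<partial>lborel)"
    unfolding muF_def by (rule emeasure_density) measurable
  also have "\<dots> = (\<integral>\<^sup>+ x. ennreal (indicator {u..v} x / x) \<partial>lborel)"
  proof (rule nn_integral_cong)
    fix x :: real
    show "ennreal (indicator {0<..1} x / x) * indicator {u..v} x = ennreal (indicator {u..v} x / x)"
      using assms by (cases "x \<in> {u..v}") (auto simp: indicator_def)
  qed
  also have "\<dots> = ennreal (ln v - ln u)"
  proof (rule nn_integral_has_integral_lborel)
    show "(\<lambda>x. indicator {u..v} x / x) \<in> borel_measurable borel" by measurable
    show "\<And>x. 0 \<le> indicator {u..v} x / (x::real)" using assms by (auto simp: indicator_def)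
    have "((\<lambda>x. if x \<in> {u..v} then 1 / x else 0) has_integral (ln v - ln u)) UNIV"
      by (rule has_integral_restrict_UNIV[THEN iffD2, OF int_inv[OF assms(1,2)]])
    thus "((\<lambda>x. indicator {u..v} x / x) has_integral ln v - ln u) UNIV"
      by (rule has_integral_eq[rotated]) (auto simp: indicator_def)
  qed
  finally show ?thesis .
qed

lemma emeasure_muF_Ioc: fixes u v :: real assumes "0 < u" "u \<le> v" "v \<le> 1"
  shows "emeasure muF {u<..v} = ennreal (ln v - ln u)"
proof -
  have s: "sets muF = sets lborel" unfolding muF_def by simp
  have e: "{u..v} = {u<..v} \<union> {u}" using assms by auto
  have "emeasure muF {u..v} = emeasure muF ({u<..v} \<union> {u})"
    by (subst e) (rule refl)
  also have "\<dots> = emeasure muF {u<..v} + emeasure muF {u}"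
    by (rule plus_emeasure[symmetric]) (auto simp: s)
  also have "emeasure muF {u} = 0"
    using emeasure_muF_Icc[of u u] assms by simp
  finally show ?thesis using emeasure_muF_Icc[OF assms] by simp
qed



locale fq =
  fixes q :: nat
  assumes oddq: "odd q" and q3: "q \<ge> 3"
begin

definition th :: real where "th = pi / real q"
abbreviation s where "s \<equiv> sq q"
abbreviation l where "l \<equiv> lam q"

lemma th_pos: "0 < th" and th_le: "th \<le> pi / 3"
  using q3 by (auto simp: th_def field_simps)

lemma sin_th_pos: "sin th > 0"
  using th_pos th_le by (intro sin_gt_zero) auto

lemma s_alt: "s x = sin (x * th) / sin th"
  by (simp add: sq_def th_def)

lemma l_alt: "l = 2 * cos th" by (simp add: lam_def th_def)

lemma l_pos: "l > 0"
proof -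
  have "cos th > 0" using th_pos th_le pi_gt3 by (intro cos_gt_zero) auto
  thus ?thesis by (simp add: l_alt)
qed

lemma s_rec: "s (x + 1) = l * s x - s (x - 1)"
proof -
  have "sin ((x+1) * th) + sin ((x-1)*th) = 2 * cos th * sin (x * th)"
    by (simp add: distrib_right left_diff_distrib sin_add sin_diff)
  thus ?thesis using sin_th_pos by (simp add: s_alt l_alt field_simps)
qed

lemma s_det: "s x ^ 2 - s (x - 1) * s (x + 1) = 1"
proof -
  define a where "a = x * th"
  have e1: "sin ((x-1) * th) = sin a * cos th - cos a * sin th"
    by (simp add: a_def left_diff_distrib sin_diff)
  have e2: "sin ((x+1) * th) = sin a * cos th + cos a * sin th"
    by (simp add: a_def distrib_right sin_add)
  have p1: "cos th ^ 2 = 1 - sin th ^ 2" by (simp add: cos_squared_eq)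
  have p2: "cos a ^ 2 = 1 - sin a ^ 2" by (simp add: cos_squared_eq)
  have "sin a ^ 2 - (sin a * cos th - cos a * sin th) * (sin a * cos th + cos a * sin th)
      = sin a ^ 2 - sin a ^ 2 * cos th ^ 2 + cos a ^ 2 * sin th ^ 2" by algebra
  also have "\<dots> = sin th ^ 2" unfolding p1 p2 by algebra
  finally have "sin (x*th) ^ 2 - sin ((x-1) * th) * sin ((x+1)*th) = sin th ^ 2"
    unfolding e1 e2 a_def .
  thus ?thesis using sin_th_pos by (simp add: s_alt field_simps power2_eq_square)
qed

lemma s_sym: "s (real q - x) = s x"
proof -
  have "(real q - x) * th = pi - x * th" using q3 by (simp add: th_def field_simps)
  thus ?thesis by (simp add: s_alt)
qed

lemma s_pos: "0 < x \<Longrightarrow> x < real q \<Longrightarrow> s x > 0"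
proof -
  assume "0 < x" "x < real q"
  hence "0 < x * th" "x * th < pi" using th_pos q3 by (auto simp: th_def field_simps)
  thus ?thesis using sin_th_pos by (simp add: s_alt sin_gt_zero)
qed

lemma s0: "s 0 = 0" by (simp add: s_alt)
lemma s1: "s 1 = 1" using sin_th_pos by (simp add: s_alt)
lemma s2: "s 2 = l"
  using s_rec[of 1] s1 s0 by simp
lemma sq_q: "s (real q) = 0" using s_sym[of "real q"] s0 by simp
lemma sq_q1: "s (real q - 1) = 1" using s_sym[of 1] s1 by simp
lemma sq_q2: "s (real q - 2) = l" using s_sym[of 2] s2 by simp

end


lemma abc_LM: fixes a b c :: real assumes "a > 0" "b > 0" "c \<ge> 0" "b^2 - a*c = 1"
  shows "c / b < (b + c) / (a + b)"
proof -
  have "c * (a + b) < (b + c) * b" using assms by (simp add: algebra_simps power2_eq_square)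
  thus ?thesis using assms by (simp add: divide_simps)
qed

lemma abc_MR: fixes a b c :: real assumes "a > 0" "b > 0" "c \<ge> 0" "b^2 - a*c = 1"
  shows "(b + c) / (a + b) < b / a"
proof -
  have "(b + c) * a < b * (a + b)" using assms by (simp add: algebra_simps power2_eq_square)
  thus ?thesis using assms by (simp add: divide_simps)
qed

lemma abc_denG: fixes a b c x :: real assumes "a > 0" "b > 0" "c \<ge> 0" "b^2 - a*c = 1"
  and "x \<le> (b + c) / (a + b)" shows "0 < - a * x + b"
proof -
  have "x < b / a" using abc_MR[OF assms(1-4)] assms(5) by linarith
  thus ?thesis using assms by (simp add: field_simps)
qed

lemma abc_denH: fixes a b c x :: real assumes "a > 0" "b > 0" "c \<ge> 0" "b^2 - a*c = 1"
  and "(b + c) / (a + b) \<le> x" shows "0 < b * x - c"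
proof -
  have "c / b < x" using abc_LM[OF assms(1-4)] assms(5) by linarith
  thus ?thesis using assms by (simp add: field_simps)
qed

lemma abc_G_le: fixes a b c x e :: real assumes "a > 0" "b > 0" "c \<ge> 0" "b^2 - a*c = 1"
  and "x \<le> (b + c) / (a + b)" and "0 \<le> e"
  shows "(b*x - c) / (- a * x + b) \<le> e \<longleftrightarrow> x \<le> (b*e + c) / (a*e + b)"
proof -
  have d: "0 < - a * x + b" by (rule abc_denG[OF assms(1-5)])
  have d2: "0 < a*e + b" using assms by (simp add: add_nonneg_pos)
  have "(b*x - c) / (- a * x + b) \<le> e \<longleftrightarrow> b*x - c \<le> e * (- a * x + b)"
    using d by (simp add: pos_divide_le_eq)
  also have "\<dots> \<longleftrightarrow> x * (a*e + b) \<le> b*e + c" by (simp add: algebra_simps)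
  also have "\<dots> \<longleftrightarrow> x \<le> (b*e + c) / (a*e + b)" using d2 by (simp add: pos_le_divide_eq)
  finally show ?thesis .
qed

lemma abc_H_le: fixes a b c x e :: real assumes "a > 0" "b > 0" "c \<ge> 0" "b^2 - a*c = 1"
  and "(b + c) / (a + b) \<le> x" and "0 \<le> e"
  shows "(- a * x + b) / (b*x - c) \<le> e \<longleftrightarrow> (c*e + b) / (b*e + a) \<le> x"
proof -
  have d: "0 < b * x - c" by (rule abc_denH[OF assms(1-5)])
  have d2: "0 < b*e + a" using assms by (simp add: add_nonneg_pos)
  have "(- a * x + b) / (b*x - c) \<le> e \<longleftrightarrow> - a * x + b \<le> e * (b*x - c)"
    using d by (simp add: pos_divide_le_eq)
  also have "\<dots> \<longleftrightarrow> c*e + b \<le> x * (b*e + a)" by (simp add: algebra_simps)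
  also have "\<dots> \<longleftrightarrow> (c*e + b) / (b*e + a) \<le> x" using d2 by (simp add: pos_divide_le_eq)
  finally show ?thesis .
qed

lemma abc_G_ge0: fixes a b c x :: real assumes "a > 0" "b > 0" "c \<ge> 0" "b^2 - a*c = 1"
  and "c / b \<le> x" "x \<le> (b + c) / (a + b)"
  shows "0 \<le> (b*x - c) / (- a * x + b)"
proof -
  have d: "0 < - a * x + b" by (rule abc_denG[OF assms(1-4,6)])
  have "c \<le> b * x" using assms by (simp add: field_simps)
  thus ?thesis using d by simp
qed

lemma abc_H_ge0: fixes a b c x :: real assumes "a > 0" "b > 0" "c \<ge> 0" "b^2 - a*c = 1"
  and "(b + c) / (a + b) \<le> x" "x \<le> b / a"
  shows "0 \<le> (- a * x + b) / (b*x - c)"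
proof -
  have d: "0 < b * x - c" by (rule abc_denH[OF assms(1-5)])
  have "a * x \<le> b" using assms by (simp add: field_simps)
  thus ?thesis using d by simp
qed

lemma abc_G_le1: fixes a b c x :: real assumes "a > 0" "b > 0" "c \<ge> 0" "b^2 - a*c = 1"
  and "x \<le> (b + c) / (a + b)"
  shows "(b*x - c) / (- a * x + b) \<le> 1"
proof -
  have "x \<le> (b*1 + c) / (a*1 + b)" using assms by simp
  thus ?thesis using abc_G_le[OF assms, of 1] by simp
qed

lemma abc_H_le1: fixes a b c x :: real assumes "a > 0" "b > 0" "c \<ge> 0" "b^2 - a*c = 1"
  and "(b + c) / (a + b) \<le> x"
  shows "(- a * x + b) / (b*x - c) \<le> 1"
proof -
  have "(c*1 + b) / (b*1 + a) \<le> x" using assms by (simp add: add.commute)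
  thus ?thesis using abc_H_le[OF assms, of 1] by simp
qed

lemma abc_GM: fixes a b c :: real assumes "a > 0" "b > 0" "c \<ge> 0" "b^2 - a*c = 1"
  shows "(b*((b + c) / (a + b)) - c) / (- a * ((b + c) / (a + b)) + b) = 1"
proof -
  have "a + b > 0" using assms by simp
  moreover have "b*(b+c) - c*(a+b) = 1" "- a*(b+c) + b*(a+b) = 1"
    using assms by (simp_all add: algebra_simps power2_eq_square)
  ultimately show ?thesis by (simp add: field_simps)
qed

lemma abc_HM: fixes a b c :: real assumes "a > 0" "b > 0" "c \<ge> 0" "b^2 - a*c = 1"
  shows "(- a * ((b + c) / (a + b)) + b) / (b*((b + c) / (a + b)) - c) = 1"
proof -
  have "a + b > 0" using assms by simp
  moreover have "b*(b+c) - c*(a+b) = 1" "- a*(b+c) + b*(a+b) = 1"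
    using assms by (simp_all add: algebra_simps power2_eq_square)
  ultimately show ?thesis by (simp add: field_simps)
qed

lemma abc_GL: fixes a b c :: real assumes "b > 0" shows "(b*(c/b) - c) / (- a * (c/b) + b) = 0"
  using assms by simp

lemma abc_HR: fixes a b c :: real assumes "a > 0" shows "(- a * (b/a) + b) / (b*(b/a) - c) = 0"
  using assms by simp

lemma abc_Ginv_gt: fixes a b c e :: real assumes "a > 0" "b > 0" "c \<ge> 0" "b^2 - a*c = 1" "e > 0"
  shows "c / b < (b*e + c) / (a*e + b)"
proof -
  have "c * (a*e + b) < (b*e + c) * b"
  proof -
    have "c * (a*e + b) = e * (a*c) + b * c" by (simp add: algebra_simps)
    also have "\<dots> < e * b^2 + b*c" using assms by simp
    also have "\<dots> = (b*e + c) * b" by (simp add: algebra_simps power2_eq_square)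
    finally show ?thesis .
  qed
  thus ?thesis using assms by (simp add: divide_simps add_pos_pos)
qed

lemma abc_Ginv_le: fixes a b c e :: real assumes "a > 0" "b > 0" "c \<ge> 0" "b^2 - a*c = 1" "0 \<le> e" "e \<le> 1"
  shows "(b*e + c) / (a*e + b) \<le> (b + c) / (a + b)"
proof -
  have "(b*e + c) * (a + b) \<le> (b + c) * (a*e + b)"
  proof -
    have "(b + c) * (a*e + b) - (b*e + c) * (a + b) = (b^2 - a*c) * (1 - e)"
      by (simp add: algebra_simps power2_eq_square)
    thus ?thesis using assms by simp
  qed
  moreover have "a*e + b > 0" using assms by (simp add: add_nonneg_pos)
  ultimately show ?thesis using assms by (simp add: divide_simps)
qed

lemma abc_Hinv_gt: fixes a b c e :: real assumes "a > 0" "b > 0" "c \<ge> 0" "b^2 - a*c = 1" "0 \<le> e" "e < 1"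
  shows "(b + c) / (a + b) < (c*e + b) / (b*e + a)"
proof -
  have "(b + c) * (b*e + a) < (c*e + b) * (a + b)"
  proof -
    have "(c*e + b) * (a + b) - (b + c) * (b*e + a) = (b^2 - a*c) * (1 - e)"
      by (simp add: algebra_simps power2_eq_square)
    thus ?thesis using assms by simp
  qed
  moreover have "b*e + a > 0" using assms by (simp add: add_nonneg_pos)
  ultimately show ?thesis using assms by (simp add: divide_simps)
qed

lemma abc_Hinv_lt: fixes a b c e :: real assumes "a > 0" "b > 0" "c \<ge> 0" "b^2 - a*c = 1" "e > 0"
  shows "(c*e + b) / (b*e + a) < b / a"
proof -
  have "(c*e + b) * a < b * (b*e + a)"
  proof -
    have "b * (b*e + a) - (c*e + b) * a = e * (b^2 - a*c)"
      by (simp add: algebra_simps power2_eq_square)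
    thus ?thesis using assms by simp
  qed
  moreover have "b*e + a > 0" using assms by (simp add: add_nonneg_pos)
  ultimately show ?thesis using assms by (simp add: divide_simps)
qed



context fq begin

definition k0 :: nat where "k0 = (q + 1) div 2"
abbreviation K where "K \<equiv> Kset q"

definition aa :: "nat \<Rightarrow> real" where "aa k = s (real k - 1)"
definition bb :: "nat \<Rightarrow> real" where "bb k = s (real k)"
definition cc :: "nat \<Rightarrow> real" where "cc k = s (real k + 1)"
definition Lk where "Lk k = cc k / bb k"
definition Mk where "Mk k = (bb k + cc k) / (aa k + bb k)"
definition Rk where "Rk k = bb k / aa k"
definition Gf where "Gf k x = (bb k * x - cc k) / (- aa k * x + bb k)"
definition Hf where "Hf k x = (- aa k * x + bb k) / (bb k * x - cc k)"
definition Ginv where "Ginv k e = (bb k * e + cc k) / (aa k * e + bb k)"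
definition Hinv where "Hinv k e = (cc k * e + bb k) / (bb k * e + aa k)"

lemma q_eq: "real q = 2 * real k0 - 1" using oddq q3
  by (auto simp: k0_def elim!: oddE)

lemma k0_ge: "k0 \<ge> 2" using oddq q3 by (auto simp: k0_def elim!: oddE)
lemma k0_le: "k0 \<le> q - 1" using oddq q3 by (auto simp: k0_def elim!: oddE)

lemma K_eq: "K = {k0..q-1}" by (simp add: Kset_def k0_def)

lemma K_bounds: "k \<in> K \<Longrightarrow> 2 \<le> k \<and> k \<le> q - 1"
  using k0_ge by (auto simp: K_eq)

lemma abc_pos: assumes "1 \<le> k" "k \<le> q - 1"
  shows "aa k \<ge> 0" "bb k > 0" "cc k \<ge> 0" "bb k ^ 2 - aa k * cc k = 1"
proof -
  have k: "1 \<le> real k" "real k \<le> real q - 1" using assms q3 by auto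
  show "aa k \<ge> 0"
  proof (cases "k = 1")
    case True thus ?thesis by (simp add: aa_def s0)
  next
    case False hence "real k \<ge> 2" using assms by auto
    thus ?thesis using k by (auto simp: aa_def intro!: less_imp_le s_pos)
  qed
  show "bb k > 0" using k by (auto simp: bb_def intro!: s_pos)
  show "cc k \<ge> 0"
  proof (cases "real k + 1 = real q")
    case True thus ?thesis by (simp add: cc_def sq_q)
  next
    case False thus ?thesis using k by (auto simp: cc_def intro!: less_imp_le s_pos)
  qed
  show "bb k ^ 2 - aa k * cc k = 1" using s_det[of "real k"] by (simp add: aa_def bb_def cc_def)
qed

lemma abcK: assumes "k \<in> K"
  shows "aa k > 0" "bb k > 0" "cc k \<ge> 0" "bb k ^ 2 - aa k * cc k = 1"
proof -
  have k: "2 \<le> k" "k \<le> q - 1" using K_bounds[OF assms] by auto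
  thus "bb k > 0" "cc k \<ge> 0" "bb k ^ 2 - aa k * cc k = 1" using abc_pos[of k] by auto
  have "2 \<le> real k" "real k \<le> real q - 1" using k q3 by auto
  thus "aa k > 0" by (auto simp: aa_def intro!: s_pos)
qed

lemma cc_pos: "k \<in> K \<Longrightarrow> k \<le> q - 2 \<Longrightarrow> cc k > 0"
  using q3 K_bounds[of k] by (auto simp: cc_def intro!: s_pos)

lemma cc_last: "cc (q - 1) = 0" using q3 by (simp add: cc_def of_nat_diff sq_q)
lemma bb_last: "bb (q - 1) = 1" using q3 by (simp add: bb_def of_nat_diff sq_q1)
lemma aa_last: "aa (q - 1) = l" using q3 sq_q2 by (simp add: aa_def of_nat_diff algebra_simps)

lemma last_K: "q - 1 \<in> K" using k0_le by (simp add: K_eq)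
lemma k0_K: "k0 \<in> K" using k0_le by (simp add: K_eq)

lemma Lk_last: "Lk (q - 1) = 0" unfolding Lk_def cc_last by simp
lemma Mk_last: "Mk (q - 1) = 1 / (l + 1)" unfolding Mk_def cc_last bb_last aa_last by (simp add: add.commute)

lemma Rk_k0: "Rk k0 = 1"
proof -
  have e: "real k0 - 1 = real q - real k0" using q_eq by simp
  have "aa k0 = bb k0" unfolding aa_def bb_def e by (rule s_sym)
  moreover have "bb k0 > 0" using abcK(2)[OF k0_K] .
  ultimately show ?thesis by (simp add: Rk_def)
qed

lemma Lk_k0: "Lk k0 = l - 1"
proof -
  have e: "real k0 - 1 = real q - real k0" using q_eq by simp
  have "aa k0 = bb k0" unfolding aa_def bb_def e by (rule s_sym)
  moreover have "cc k0 = l * bb k0 - aa k0" using s_rec[of "real k0"] by (simp add: aa_def bb_def cc_def)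
  moreover have "bb k0 > 0" using abcK(2)[OF k0_K] .
  ultimately show ?thesis by (simp add: Lk_def field_simps)
qed

lemma Rk_Suc: "k \<ge> 1 \<Longrightarrow> Rk (Suc k) = Lk k"
  by (simp add: Rk_def Lk_def aa_def bb_def cc_def add.commute)

lemma LMR: assumes "k \<in> K" shows "Lk k < Mk k" "Mk k < Rk k"
  using abc_LM[OF abcK[OF assms]] abc_MR[OF abcK[OF assms]] by (simp_all add: Lk_def Mk_def Rk_def)

lemma Lk_step: assumes "1 \<le> j" "Suc j \<le> q - 1" shows "Lk (Suc j) < Lk j"
proof -
  have "aa (Suc j) > 0" using assms q3 by (auto simp: aa_def intro!: s_pos)
  moreover have "bb (Suc j) > 0" "cc (Suc j) \<ge> 0" "bb (Suc j) ^ 2 - aa (Suc j) * cc (Suc j) = 1"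
    using abc_pos[of "Suc j"] assms by auto
  ultimately have "cc (Suc j) / bb (Suc j) < bb (Suc j) / aa (Suc j)"
    using abc_LM abc_MR by (meson less_trans)
  thus ?thesis using Rk_Suc[of j] assms by (simp add: Lk_def Rk_def)
qed

lemma Lk_strict: assumes "1 \<le> i" "i < j" "j \<le> q - 1" shows "Lk j < Lk i"
  using assms
proof (induction j)
  case 0 thus ?case by simp
next
  case (Suc j)
  show ?case
  proof (cases "i = j")
    case True thus ?thesis using Lk_step Suc by simp
  next
    case False
    hence "Lk j < Lk i" using Suc by auto
    moreover have "Lk (Suc j) < Lk j" using Lk_step Suc by simp
    ultimately show ?thesis by simp
  qed
qed

lemma Lk_mono: "1 \<le> i \<Longrightarrow> i \<le> j \<Longrightarrow> j \<le> q - 1 \<Longrightarrow> Lk j \<le> Lk i"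
  using Lk_strict[of i j] by (cases "i = j") auto

lemma Rk_le_Lk: assumes "k1 \<in> K" "k2 \<in> K" "k1 < k2" shows "Rk k2 \<le> Lk k1"
proof -
  obtain j where j: "k2 = Suc j" using assms by (cases k2) auto
  have "Rk k2 = Lk j" using j Rk_Suc K_bounds[OF assms(1)] assms by simp
  also have "\<dots> \<le> Lk k1" using Lk_mono[of k1 j] K_bounds[OF assms(1)] K_bounds[OF assms(2)] assms j by auto
  finally show ?thesis .
qed

lemma Lk_nonneg: "k \<in> K \<Longrightarrow> 0 \<le> Lk k"
  using abcK[of k] by (simp add: Lk_def)

lemma Rk_le1: assumes "k \<in> K" shows "Rk k \<le> 1"
proof (cases "k = k0")
  case True thus ?thesis by (simp add: Rk_k0)
next
  case False
  hence "k0 < k" using assms by (auto simp: K_eq)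
  thus ?thesis using Rk_le_Lk[OF k0_K assms] Rk_k0 LMR[OF k0_K] by simp
qed

end


context fq begin

definition Br where "Br k x y \<longleftrightarrow> (x \<in> {Lk k..Mk k} \<and> y = Gf k x) \<or> (x \<in> {Mk k..Rk k} \<and> y = Hf k x)"

lemma mob_e1: "mob (minv (gk q k)) 0 = Lk k"
  by (simp add: mob_def minv_def gk_def Lk_def aa_def bb_def cc_def)
lemma mob_e2: "mob (minv (gk q k)) 1 = Mk k"
  by (simp add: mob_def minv_def gk_def Mk_def aa_def bb_def cc_def)
lemma mob_e3: "mob (minv (Qmul (gk q k))) 1 = Mk k"
proof -
  have "mob (minv (Qmul (gk q k))) 1 = (- bb k - cc k) / (- aa k - bb k)"
    by (simp add: mob_def minv_def gk_def Qmul_def aa_def bb_def cc_def algebra_simps)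
  also have "\<dots> = (- (bb k + cc k)) / (- (aa k + bb k))" by simp
  also have "\<dots> = Mk k" unfolding Mk_def by (rule minus_divide_divide)
  finally show ?thesis .
qed
lemma mob_e4: "mob (minv (Qmul (gk q k))) 0 = Rk k"
  by (simp add: mob_def minv_def gk_def Qmul_def Rk_def aa_def bb_def cc_def)
lemma mob_e5: "mob (gk q k) x = Gf k x"
  by (simp add: mob_def gk_def Gf_def aa_def bb_def cc_def)
lemma mob_e6: "mob (Qmul (gk q k)) x = Hf k x"
  by (simp add: mob_def gk_def Qmul_def Hf_def aa_def bb_def cc_def)

lemma Farey_alt: "Farey q x = (SOME y. \<exists>k\<in>K. Br k x y)"
  unfolding Farey_def Br_def mob_e1 mob_e2 mob_e3 mob_e4 mob_e5 mob_e6 ..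

lemma GL0: "k \<in> K \<Longrightarrow> Gf k (Lk k) = 0"
  using abcK[of k] by (simp add: Gf_def Lk_def)
lemma HR0: "k \<in> K \<Longrightarrow> Hf k (Rk k) = 0"
  using abcK[of k] by (simp add: Hf_def Rk_def)
lemma GM1: assumes "k \<in> K" shows "Gf k (Mk k) = 1"
  unfolding Gf_def Mk_def by (rule abc_GM[OF abcK[OF assms]])
lemma HM1: assumes "k \<in> K" shows "Hf k (Mk k) = 1"
  unfolding Hf_def Mk_def by (rule abc_HM[OF abcK[OF assms]])

lemma Br_range: "k \<in> K \<Longrightarrow> Br k x y \<Longrightarrow> Lk k \<le> x \<and> x \<le> Rk k"
  using LMR[of k] by (auto simp: Br_def)

lemma Br_uniq_lt: assumes "k1 \<in> K" "k2 \<in> K" "k1 < k2" "Br k1 x y1" "Br k2 x y2"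
  shows "y1 = y2"
proof -
  have "Rk k2 \<le> Lk k1" by (rule Rk_le_Lk[OF assms(1-3)])
  with Br_range[OF assms(1,4)] Br_range[OF assms(2,5)]
  have x1: "x = Lk k1" and x2: "x = Rk k2" by auto
  have "y1 = 0" using assms(4) LMR[OF assms(1)] GL0[OF assms(1)] x1 by (auto simp: Br_def)
  moreover have "y2 = 0" using assms(5) LMR[OF assms(2)] HR0[OF assms(2)] x2 by (auto simp: Br_def)
  ultimately show ?thesis by simp
qed

lemma Br_uniq: assumes "k1 \<in> K" "k2 \<in> K" "Br k1 x y1" "Br k2 x y2"
  shows "y1 = y2"
proof -
  consider "k1 < k2" | "k2 < k1" | "k1 = k2" by linarith
  thus ?thesis
  proof cases
    case 1 thus ?thesis using Br_uniq_lt assms by blast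
  next
    case 2 thus ?thesis using Br_uniq_lt assms by (metis)
  next
    case 3
    thus ?thesis using assms GM1[OF assms(1)] HM1[OF assms(1)] by (auto simp: Br_def)
  qed
qed

lemma Farey_Br: assumes "k \<in> K" "Br k x y" shows "Farey q x = y"
  unfolding Farey_alt
proof (rule someI2)
  show "\<exists>k\<in>K. Br k x y" using assms by blast
next
  fix z assume "\<exists>k\<in>K. Br k x z"
  then obtain k' where "k' \<in> K" "Br k' x z" by blast
  thus "z = y" using Br_uniq assms by blast
qed

lemma Farey_G: "k \<in> K \<Longrightarrow> Lk k \<le> x \<Longrightarrow> x \<le> Mk k \<Longrightarrow> Farey q x = Gf k x"
  by (rule Farey_Br) (auto simp: Br_def)
lemma Farey_H: "k \<in> K \<Longrightarrow> Mk k \<le> x \<Longrightarrow> x \<le> Rk k \<Longrightarrow> Farey q x = Hf k x"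
  by (rule Farey_Br) (auto simp: Br_def)

lemma cover_strict: assumes "0 < x" "x \<le> 1" shows "\<exists>k\<in>K. Lk k < x \<and> x \<le> Rk k"
proof -
  define k where "k = (LEAST k. k \<in> K \<and> Lk k < x)"
  have ex: "q - 1 \<in> K \<and> Lk (q - 1) < x" using last_K Lk_last assms by simp
  have k: "k \<in> K \<and> Lk k < x" unfolding k_def by (rule LeastI[where P="\<lambda>k. k \<in> K \<and> Lk k < x", OF ex])
  show ?thesis
  proof (cases "k = k0")
    case True thus ?thesis using k Rk_k0 assms by auto
  next
    case False
    hence kk: "k0 < k" using k by (auto simp: K_eq)
    then obtain j where j: "k = Suc j" by (cases k) auto
    have jK: "j \<in> K" using kk j k by (auto simp: K_eq)
    have "\<not> (j \<in> K \<and> Lk j < x)" using not_less_Least[of j "\<lambda>k. k \<in> K \<and> Lk k < x"] j k_def by auto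
    hence "x \<le> Lk j" using jK by auto
    moreover have "Rk k = Lk j" using j Rk_Suc K_bounds[OF jK] by simp
    ultimately show ?thesis using k by auto
  qed
qed

lemma cover: assumes "0 \<le> x" "x \<le> 1" shows "\<exists>k\<in>K. Lk k \<le> x \<and> x \<le> Rk k"
proof (cases "x = 0")
  case True thus ?thesis using last_K Lk_last LMR[OF last_K] by (intro bexI[of _ "q - 1"]) auto
next
  case False thus ?thesis using cover_strict[of x] assms by force
qed

lemma Gf_01: "k \<in> K \<Longrightarrow> Lk k \<le> x \<Longrightarrow> x \<le> Mk k \<Longrightarrow> 0 \<le> Gf k x \<and> Gf k x \<le> 1"
  using abc_G_ge0[OF abcK] abc_G_le1[OF abcK] by (simp add: Gf_def Lk_def Mk_def)
lemma Hf_01: "k \<in> K \<Longrightarrow> Mk k \<le> x \<Longrightarrow> x \<le> Rk k \<Longrightarrow> 0 \<le> Hf k x \<and> Hf k x \<le> 1"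
  using abc_H_ge0[OF abcK] abc_H_le1[OF abcK] by (simp add: Hf_def Rk_def Mk_def)

lemma Farey_01: assumes "0 \<le> x" "x \<le> 1" shows "0 \<le> Farey q x \<and> Farey q x \<le> 1"
proof -
  obtain k where k: "k \<in> K" "Lk k \<le> x" "x \<le> Rk k" using cover[OF assms] by blast
  show ?thesis
  proof (cases "x \<le> Mk k")
    case True thus ?thesis using k Farey_G Gf_01 by simp
  next
    case False thus ?thesis using k Farey_H Hf_01 by simp
  qed
qed

lemma Farey_small: assumes "0 \<le> x" "x \<le> 1 / (l + 1)" shows "Farey q x = x / (1 - l * x)"
proof -
  have "Farey q x = Gf (q - 1) x"
    using Farey_G[OF last_K, of x] assms Lk_last Mk_last by simp
  also have "\<dots> = x / (1 - l * x)" unfolding Gf_def cc_last bb_last aa_last by simp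
  finally show ?thesis .
qed

lemma Farey_pow_01: "0 \<le> x \<Longrightarrow> x \<le> 1 \<Longrightarrow> 0 \<le> (Farey q ^^ n) x \<and> (Farey q ^^ n) x \<le> 1"
  by (induction n) (auto simp: Farey_01)

end


lemma funpow_Suc': "(f ^^ Suc i) y = (f ^^ i) (f y)"
  by (simp add: funpow_swap1)

lemma all_less_Suc_shift: "(\<forall>i<Suc m. P i) \<longleftrightarrow> P 0 \<and> (\<forall>i<m. P (Suc i))"
  by (auto simp: less_Suc_eq_0_disj)

lemma ex_le_Suc_shift: "(\<exists>k\<le>Suc N. P k) \<longleftrightarrow> P 0 \<or> (\<exists>k\<le>N. P (Suc k))"
proof
  assume "\<exists>k\<le>Suc N. P k"
  then obtain k where k: "k \<le> Suc N" "P k" by blast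
  show "P 0 \<or> (\<exists>k\<le>N. P (Suc k))"
  proof (cases k)
    case 0 thus ?thesis using k by simp
  next
    case (Suc i) thus ?thesis using k by auto
  qed
next
  assume "P 0 \<or> (\<exists>k\<le>N. P (Suc k))"
  thus "\<exists>k\<le>Suc N. P k" by (metis Suc_le_mono le0)
qed

lemma ex_shift: "(\<exists>j. 1 \<le> j \<and> j \<le> n \<and> P j) \<longleftrightarrow> (\<exists>i<n. P (Suc i))"
proof
  assume "\<exists>j. 1 \<le> j \<and> j \<le> n \<and> P j"
  then obtain j where j: "1 \<le> j" "j \<le> n" "P j" by blast
  then obtain i where "j = Suc i" by (cases j) auto
  thus "\<exists>i<n. P (Suc i)" using j by (auto simp: Suc_le_eq)
next
  assume "\<exists>i<n. P (Suc i)"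
  then obtain i where "i < n" "P (Suc i)" by blast
  thus "\<exists>j. 1 \<le> j \<and> j \<le> n \<and> P j" by (intro exI[of _ "Suc i"]) auto
qed

lemma rt_gt: "return_time F Y x > enat n \<longleftrightarrow> \<not> (\<exists>j. 1 \<le> j \<and> j \<le> n \<and> (F ^^ j) x \<in> Y)"
proof (cases "\<exists>m\<ge>1. (F ^^ m) x \<in> Y")
  case True
  define L where "L = (LEAST m. m \<ge> 1 \<and> (F ^^ m) x \<in> Y)"
  have rt: "return_time F Y x = enat L" using True by (simp add: return_time_def L_def)
  have L: "L \<ge> 1 \<and> (F ^^ L) x \<in> Y" unfolding L_def using True
    by (metis (mono_tags, lifting) LeastI)
  have Lmin: "\<And>j. j \<ge> 1 \<Longrightarrow> (F ^^ j) x \<in> Y \<Longrightarrow> L \<le> j" unfolding L_def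
    by (simp add: Least_le)
  have "enat n < enat L \<longleftrightarrow> n < L" by simp
  also have "\<dots> \<longleftrightarrow> \<not> (\<exists>j. 1 \<le> j \<and> j \<le> n \<and> (F ^^ j) x \<in> Y)"
  proof
    assume nL: "n < L"
    show "\<not> (\<exists>j. 1 \<le> j \<and> j \<le> n \<and> (F ^^ j) x \<in> Y)"
    proof
      assume "\<exists>j. 1 \<le> j \<and> j \<le> n \<and> (F ^^ j) x \<in> Y"
      then obtain j where "1 \<le> j" "j \<le> n" "(F ^^ j) x \<in> Y" by blast
      hence "L \<le> j" using Lmin by blast
      thus False using nL \<open>j \<le> n\<close> by simp
    qed
  next
    assume h: "\<not> (\<exists>j. 1 \<le> j \<and> j \<le> n \<and> (F ^^ j) x \<in> Y)"
    show "n < L"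
    proof (rule ccontr)
      assume "\<not> n < L"
      hence "L \<le> n" by simp
      thus False using h L by blast
    qed
  qed
  finally show ?thesis unfolding rt .
next
  case False thus ?thesis by (auto simp: return_time_def)
qed

context fq begin

definition cN :: "nat \<Rightarrow> real" where "cN N = 1 / (1 + (real N + 1) * l)"
definition en :: "nat \<Rightarrow> nat \<Rightarrow> real" where "en N n = 1 / (1 + (real N + real n) * l)"
definition AA where "AA = {1 / (l + 1) <.. 1}"

lemma cN_pos: "cN N > 0" using l_pos by (simp add: cN_def add_pos_pos)
lemma cN_le: "cN N \<le> 1 / (l + 1)"
  using l_pos by (simp add: cN_def divide_simps add_pos_pos mult_le_cancel_right1 algebra_simps)
lemma en_pos: "en N n > 0" using l_pos by (simp add: en_def add_pos_nonneg)
lemma en_le: "n \<ge> 1 \<Longrightarrow> en N n \<le> cN N"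
  using l_pos by (simp add: en_def cN_def divide_simps add_pos_nonneg add_pos_pos algebra_simps)

lemma small_step: assumes "0 \<le> y" "y \<le> 1 / (l + 1)" "D > 0"
  shows "y / (1 - l * y) \<le> 1 / D \<longleftrightarrow> y \<le> 1 / (D + l)"
proof -
  have "l * y < 1"
  proof -
    have "l * y \<le> l / (l + 1)" using assms l_pos by (simp add: divide_simps mult_left_mono)
    also have "\<dots> < 1" using l_pos by simp
    finally show ?thesis .
  qed
  hence p: "1 - l * y > 0" by simp
  have "y / (1 - l * y) \<le> 1 / D \<longleftrightarrow> y * D \<le> 1 - l * y"
    using p assms by (simp add: divide_simps)
  also have "\<dots> \<longleftrightarrow> y * (D + l) \<le> 1" by (simp add: algebra_simps)
  also have "\<dots> \<longleftrightarrow> y \<le> 1 / (D + l)" using assms l_pos by (simp add: divide_simps add_pos_pos)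
  finally show ?thesis .
qed

lemma small_mono: assumes "0 \<le> y" "y \<le> 1 / (l + 1)" shows "y \<le> Farey q y"
proof -
  have "l * y \<le> l / (l + 1)" using assms l_pos by (simp add: divide_simps mult_left_mono)
  also have "\<dots> < 1" using l_pos by simp
  finally have "0 < 1 - l * y" by simp
  moreover have "1 - l * y \<le> 1" using l_pos assms by simp
  ultimately have "y \<le> y / (1 - l * y)" using assms by (simp add: divide_simps mult_left_le)
  thus ?thesis using Farey_small[OF assms] by simp
qed

lemma orbit_L: assumes "0 \<le> y" "y \<le> 1"
  shows "(\<forall>i<Suc m. (Farey q ^^ i) y \<le> cN N) \<longleftrightarrow> y \<le> en N (Suc m)"
  using assms
proof (induction m arbitrary: y)
  case 0 thus ?case by (simp add: cN_def en_def)
next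
  case (Suc m)
  have split: "(\<forall>i<Suc (Suc m). (Farey q ^^ i) y \<le> cN N) \<longleftrightarrow>
      y \<le> cN N \<and> (\<forall>i<Suc m. (Farey q ^^ i) (Farey q y) \<le> cN N)"
    by (simp only: all_less_Suc_shift funpow_Suc' funpow_0)
  show ?case
  proof (cases "y \<le> cN N")
    case True
    hence ys: "y \<le> 1 / (l + 1)" using cN_le[of N] by linarith
    have F01: "0 \<le> Farey q y \<and> Farey q y \<le> 1" using Farey_01 Suc.prems by simp
    have "(\<forall>i<Suc (Suc m). (Farey q ^^ i) y \<le> cN N) \<longleftrightarrow> Farey q y \<le> en N (Suc m)"
      using split True Suc.IH F01 by simp
    also have "\<dots> \<longleftrightarrow> y \<le> en N (Suc (Suc m))"
    proof -
      have D: "1 + (real N + real (Suc m)) * l > 0" using l_pos by (simp add: add_pos_nonneg)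
      have "Farey q y \<le> en N (Suc m) \<longleftrightarrow> y \<le> 1 / ((1 + (real N + real (Suc m)) * l) + l)"
        unfolding Farey_small[OF Suc.prems(1) ys] en_def by (rule small_step[OF Suc.prems(1) ys D])
      also have "(1 + (real N + real (Suc m)) * l) + l = 1 + (real N + real (Suc (Suc m))) * l"
        by (simp add: algebra_simps)
      finally show ?thesis by (simp add: en_def)
    qed
    finally show ?thesis .
  next
    case False
    moreover have "en N (Suc (Suc m)) \<le> cN N" by (rule en_le) simp
    ultimately show ?thesis using split by auto
  qed
qed

lemma Y_char: assumes "0 \<le> x" "x \<le> 1"
  shows "(\<exists>k\<le>N. (Farey q ^^ k) x \<in> AA) \<longleftrightarrow> cN N < x"
  using assms
proof (induction N arbitrary: x)
  case 0 thus ?case by (simp add: AA_def cN_def add.commute)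
next
  case (Suc N)
  have split: "(\<exists>k\<le>Suc N. (Farey q ^^ k) x \<in> AA) \<longleftrightarrow> x \<in> AA \<or> (\<exists>k\<le>N. (Farey q ^^ k) (Farey q x) \<in> AA)"
    by (simp only: ex_le_Suc_shift funpow_Suc' funpow_0)
  have F01: "0 \<le> Farey q x \<and> Farey q x \<le> 1" using Farey_01 Suc.prems by simp
  have "(\<exists>k\<le>Suc N. (Farey q ^^ k) x \<in> AA) \<longleftrightarrow> x \<in> AA \<or> cN N < Farey q x"
    using split Suc.IH F01 by simp
  also have "\<dots> \<longleftrightarrow> cN (Suc N) < x"
  proof (cases "x \<in> AA")
    case True
    hence "1 / (l + 1) < x" by (simp add: AA_def)
    moreover have "cN (Suc N) \<le> 1 / (l + 1)" by (rule cN_le)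
    ultimately show ?thesis using True by simp
  next
    case False
    hence xs: "x \<le> 1 / (l + 1)" using Suc.prems by (auto simp: AA_def)
    have D: "1 + (real N + 1) * l > 0" using l_pos by (simp add: add_pos_nonneg)
    have "\<not> (Farey q x \<le> cN N) \<longleftrightarrow> \<not> (x \<le> 1 / ((1 + (real N + 1) * l) + l))"
      unfolding Farey_small[OF Suc.prems(1) xs] cN_def using small_step[OF Suc.prems(1) xs D] by simp
    moreover have "(1 + (real N + 1) * l) + l = 1 + (real (Suc N) + 1) * l" by (simp add: algebra_simps)
    ultimately show ?thesis using False by (simp add: cN_def not_le)
  qed
  finally show ?case .
qed

lemma tail_set: assumes "n \<ge> 1"
  shows "{x \<in> {cN N<..1}. return_time (Farey q) {cN N<..1} x > enat n} = {x \<in> AA. Farey q x \<le> en N n}"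
proof -
  obtain m where m: "n = Suc m" using assms by (cases n) auto
  have AY: "AA \<subseteq> {cN N<..1}" using cN_le[of N] by (auto simp: AA_def)
  have key: "return_time (Farey q) {cN N<..1} x > enat n \<longleftrightarrow> Farey q x \<le> en N n"
    if x: "x \<in> {cN N<..1}" for x
  proof -
    have x01: "0 \<le> x" "x \<le> 1" using x cN_pos[of N] by auto
    have F01: "0 \<le> Farey q x" "Farey q x \<le> 1" using Farey_01[OF x01] by auto
    have "return_time (Farey q) {cN N<..1} x > enat n \<longleftrightarrow>
        \<not> (\<exists>i<n. (Farey q ^^ i) (Farey q x) \<in> {cN N<..1})"
      unfolding rt_gt ex_shift funpow_Suc' ..
    also have "\<dots> \<longleftrightarrow> (\<forall>i<n. (Farey q ^^ i) (Farey q x) \<le> cN N)"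
      using Farey_pow_01[OF F01] by (auto simp: not_le)
    also have "\<dots> \<longleftrightarrow> Farey q x \<le> en N n" unfolding m by (rule orbit_L[OF F01])
    finally show ?thesis .
  qed
  have "x \<in> AA" if x: "x \<in> {cN N<..1}" "Farey q x \<le> en N n" for x
  proof (rule ccontr)
    assume "x \<notin> AA"
    hence xs: "x \<le> 1 / (l + 1)" using x by (auto simp: AA_def)
    have "x \<le> Farey q x" using small_mono[OF _ xs] x cN_pos[of N] by simp
    thus False using x en_le[OF assms, of N] by simp
  qed
  thus ?thesis using key AY by blast
qed

end


context fq begin

definition K' where "K' = K - {q - 1}"
definition SG where "SG e = (\<Union>k\<in>K'. {Lk k<..Ginv k e})"
definition SH where "SH e = (\<Union>k\<in>K. {Hinv k e..Rk k})"

lemma K'_sub: "k \<in> K' \<Longrightarrow> k \<in> K" by (simp add: K'_def)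
lemma K'_le: "k \<in> K' \<Longrightarrow> k \<le> q - 2" using K_bounds[of k] by (auto simp: K'_def)

lemma Ginv_gt: "k \<in> K \<Longrightarrow> 0 < e \<Longrightarrow> Lk k < Ginv k e"
  using abc_Ginv_gt[OF abcK] by (simp add: Lk_def Ginv_def)
lemma Ginv_le: "k \<in> K \<Longrightarrow> 0 \<le> e \<Longrightarrow> e \<le> 1 \<Longrightarrow> Ginv k e \<le> Mk k"
  using abc_Ginv_le[OF abcK] by (simp add: Mk_def Ginv_def)
lemma Hinv_gt: "k \<in> K \<Longrightarrow> 0 \<le> e \<Longrightarrow> e < 1 \<Longrightarrow> Mk k < Hinv k e"
  using abc_Hinv_gt[OF abcK] by (simp add: Mk_def Hinv_def)
lemma Hinv_lt: "k \<in> K \<Longrightarrow> 0 < e \<Longrightarrow> Hinv k e < Rk k"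
  using abc_Hinv_lt[OF abcK] by (simp add: Rk_def Hinv_def)
lemma G_le: "k \<in> K \<Longrightarrow> x \<le> Mk k \<Longrightarrow> 0 \<le> e \<Longrightarrow> Gf k x \<le> e \<longleftrightarrow> x \<le> Ginv k e"
  using abc_G_le[OF abcK] by (simp add: Mk_def Gf_def Ginv_def)
lemma H_le: "k \<in> K \<Longrightarrow> Mk k \<le> x \<Longrightarrow> 0 \<le> e \<Longrightarrow> Hf k x \<le> e \<longleftrightarrow> Hinv k e \<le> x"
  using abc_H_le[OF abcK] by (simp add: Mk_def Hf_def Hinv_def)

lemma Lk_gt_A: assumes "k \<in> K'" shows "1 / (l + 1) < Lk k"
proof -
  have k: "k \<in> K" "k \<le> q - 2" using assms K'_sub K'_le by auto
  have "1 \<le> k" using K_bounds[OF k(1)] by simp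
  have q2: "Suc (q - 2) = q - 1" using q3 by simp
  have "Rk (q - 1) = Lk (q - 2)" using Rk_Suc[of "q - 2"] q3 q2 by simp
  moreover have "Lk (q - 2) \<le> Lk k" using Lk_mono[of k "q - 2"] k \<open>1 \<le> k\<close> q3 by simp
  moreover have "Mk (q - 1) < Rk (q - 1)" using LMR[OF last_K] by simp
  ultimately show ?thesis using Mk_last by simp
qed

lemma Mk_ge_A: assumes "k \<in> K" shows "1 / (l + 1) \<le> Mk k"
proof (cases "k = q - 1")
  case True thus ?thesis using Mk_last by simp
next
  case False
  hence "k \<in> K'" using assms by (simp add: K'_def)
  thus ?thesis using Lk_gt_A LMR[OF assms] by (meson less_imp_le less_trans)
qed

lemma set_eq: assumes e: "0 < e" "e < 1"
  shows "{x \<in> AA. Farey q x \<le> e} = SG e \<union> SH e"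
proof (intro equalityI subsetI)
  fix x assume "x \<in> {x \<in> AA. Farey q x \<le> e}"
  hence xA: "1 / (l + 1) < x" "x \<le> 1" and Fx: "Farey q x \<le> e" by (auto simp: AA_def)
  have "0 < x" using xA l_pos by (meson divide_pos_pos less_trans add_pos_pos zero_less_one)
  then obtain k where k: "k \<in> K" "Lk k < x" "x \<le> Rk k" using cover_strict xA by blast
  show "x \<in> SG e \<union> SH e"
  proof (cases "x \<le> Mk k")
    case True
    have "k \<noteq> q - 1" using True xA Mk_last by auto
    hence "k \<in> K'" using k by (simp add: K'_def)
    moreover have "x \<le> Ginv k e" using Fx Farey_G[OF k(1) _ True] k G_le[OF k(1) True] e by simp
    ultimately show ?thesis using k by (auto simp: SG_def)
  next
    case False
    have "Hinv k e \<le> x" using Fx Farey_H[OF k(1) _ k(3)] False H_le[OF k(1)] e by simp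
    thus ?thesis using k by (auto simp: SH_def)
  qed
next
  fix x assume "x \<in> SG e \<union> SH e"
  thus "x \<in> {x \<in> AA. Farey q x \<le> e}"
  proof
    assume "x \<in> SG e"
    then obtain k where k: "k \<in> K'" "Lk k < x" "x \<le> Ginv k e" by (auto simp: SG_def)
    have kK: "k \<in> K" using k K'_sub by simp
    have xM: "x \<le> Mk k" using Ginv_le[OF kK less_imp_le[OF e(1)] less_imp_le[OF e(2)]] k by linarith
    have "Farey q x = Gf k x" using Farey_G[OF kK] k xM by simp
    hence "Farey q x \<le> e" using G_le[OF kK xM] e k by simp
    moreover have "1 / (l + 1) < x" using Lk_gt_A[OF k(1)] k by simp
    moreover have "x \<le> 1" using xM LMR[OF kK] Rk_le1[OF kK] by simp
    ultimately show ?thesis by (simp add: AA_def)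
  next
    assume "x \<in> SH e"
    then obtain k where k: "k \<in> K" "Hinv k e \<le> x" "x \<le> Rk k" by (auto simp: SH_def)
    have xM: "Mk k \<le> x" using Hinv_gt[OF k(1) less_imp_le[OF e(1)] e(2)] k by linarith
    have "Farey q x = Hf k x" using Farey_H[OF k(1) xM k(3)] .
    hence "Farey q x \<le> e" using H_le[OF k(1) xM] e k by simp
    moreover have "1 / (l + 1) < x" using Mk_ge_A[OF k(1)] Hinv_gt[OF k(1) less_imp_le[OF e(1)] e(2)] k by linarith
    moreover have "x \<le> 1" using Rk_le1[OF k(1)] k by simp
    ultimately show ?thesis by (simp add: AA_def)
  qed
qed

lemma disj_LR: assumes "k1 \<in> K" "k2 \<in> K" "k1 \<noteq> k2"
  shows "{Lk k1<..Rk k1} \<inter> {Lk k2<..Rk k2} = {}"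
proof -
  consider "k1 < k2" | "k2 < k1" using assms by linarith
  thus ?thesis
  proof cases
    case 1 thus ?thesis using Rk_le_Lk[OF assms(1,2)] by auto
  next
    case 2 thus ?thesis using Rk_le_Lk[OF assms(2,1)] by auto
  qed
qed

lemma SG_piece: "k \<in> K \<Longrightarrow> 0 < e \<Longrightarrow> e < 1 \<Longrightarrow> {Lk k<..Ginv k e} \<subseteq> {Lk k<..Mk k}"
  using Ginv_le[of k e] by auto
lemma SH_piece: "k \<in> K \<Longrightarrow> 0 < e \<Longrightarrow> e < 1 \<Longrightarrow> {Hinv k e..Rk k} \<subseteq> {Mk k<..Rk k}"
  using Hinv_gt[of k e] by auto

lemma sets_muF: "sets muF = sets borel" by (simp add: muF_def)

lemma emeasure_SG: assumes e: "0 < e" "e < 1"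
  shows "emeasure muF (SG e) = ennreal (\<Sum>k\<in>K'. ln (Ginv k e) - ln (Lk k))"
proof -
  have "emeasure muF (SG e) = (\<Sum>k\<in>K'. emeasure muF {Lk k<..Ginv k e})"
    unfolding SG_def
  proof (rule sum_emeasure[symmetric])
    show "(\<lambda>k. {Lk k<..Ginv k e}) ` K' \<subseteq> sets muF" by (auto simp: sets_muF)
    show "finite K'" by (simp add: K'_def Kset_def)
    show "disjoint_family_on (\<lambda>k. {Lk k<..Ginv k e}) K'"
      unfolding disjoint_family_on_def
    proof (intro ballI impI)
      fix k1 k2 assume "k1 \<in> K'" "k2 \<in> K'" "k1 \<noteq> k2"
      hence "k1 \<in> K" "k2 \<in> K" "k1 \<noteq> k2" by (auto simp: K'_def)
      thus "{Lk k1<..Ginv k1 e} \<inter> {Lk k2<..Ginv k2 e} = {}"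
        using disj_LR SG_piece[OF _ e] LMR by (smt (verit) disjoint_iff greaterThanAtMost_iff subset_eq)
    qed
  qed
  also have "\<dots> = (\<Sum>k\<in>K'. ennreal (ln (Ginv k e) - ln (Lk k)))"
  proof (rule sum.cong[OF refl])
    fix k assume k: "k \<in> K'"
    have kK: "k \<in> K" using k K'_sub by simp
    have "0 < Lk k" using cc_pos[OF kK K'_le[OF k]] abcK[OF kK] by (simp add: Lk_def)
    moreover have "Lk k \<le> Ginv k e" using Ginv_gt[OF kK e(1)] by simp
    moreover have "Ginv k e \<le> 1" using Ginv_le[OF kK less_imp_le[OF e(1)] less_imp_le[OF e(2)]] LMR[OF kK] Rk_le1[OF kK] by linarith
    ultimately show "emeasure muF {Lk k<..Ginv k e} = ennreal (ln (Ginv k e) - ln (Lk k))"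
      by (rule emeasure_muF_Ioc)
  qed
  also have "\<dots> = ennreal (\<Sum>k\<in>K'. ln (Ginv k e) - ln (Lk k))"
  proof (rule sum_ennreal)
    fix k assume k: "k \<in> K'"
    have kK: "k \<in> K" using k K'_sub by simp
    have "0 < Lk k" using cc_pos[OF kK K'_le[OF k]] abcK[OF kK] by (simp add: Lk_def)
    thus "0 \<le> ln (Ginv k e) - ln (Lk k)" using Ginv_gt[OF kK e(1)] by simp
  qed
  finally show ?thesis .
qed

lemma Hinv_pos: "k \<in> K \<Longrightarrow> 0 \<le> e \<Longrightarrow> e < 1 \<Longrightarrow> 0 < Hinv k e"
  using Hinv_gt[of k e] LMR[of k] Lk_nonneg[of k] by linarith

lemma emeasure_SH: assumes e: "0 < e" "e < 1"
  shows "emeasure muF (SH e) = ennreal (\<Sum>k\<in>K. ln (Rk k) - ln (Hinv k e))"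
proof -
  have "emeasure muF (SH e) = (\<Sum>k\<in>K. emeasure muF {Hinv k e..Rk k})"
    unfolding SH_def
  proof (rule sum_emeasure[symmetric])
    show "(\<lambda>k. {Hinv k e..Rk k}) ` K \<subseteq> sets muF" by (auto simp: sets_muF)
    show "finite K" by (simp add: Kset_def)
    show "disjoint_family_on (\<lambda>k. {Hinv k e..Rk k}) K"
      unfolding disjoint_family_on_def
    proof (intro ballI impI)
      fix k1 k2 assume "k1 \<in> K" "k2 \<in> K" "k1 \<noteq> k2"
      thus "{Hinv k1 e..Rk k1} \<inter> {Hinv k2 e..Rk k2} = {}"
        using disj_LR SH_piece[OF _ e] LMR by (smt (verit) disjoint_iff greaterThanAtMost_iff subset_eq)
    qed
  qed
  also have "\<dots> = (\<Sum>k\<in>K. ennreal (ln (Rk k) - ln (Hinv k e)))"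
  proof (rule sum.cong[OF refl])
    fix k assume k: "k \<in> K"
    show "emeasure muF {Hinv k e..Rk k} = ennreal (ln (Rk k) - ln (Hinv k e))"
      using Hinv_pos[OF k less_imp_le[OF e(1)] e(2)] less_imp_le[OF Hinv_lt[OF k e(1)]] Rk_le1[OF k] by (intro emeasure_muF_Icc) auto
  qed
  also have "\<dots> = ennreal (\<Sum>k\<in>K. ln (Rk k) - ln (Hinv k e))"
  proof (rule sum_ennreal)
    fix k assume k: "k \<in> K"
    show "0 \<le> ln (Rk k) - ln (Hinv k e)" using Hinv_pos[OF k less_imp_le[OF e(1)] e(2)] Hinv_lt[OF k e(1)] by simp
  qed
  finally show ?thesis .
qed

definition GG where "GG e = (\<Sum>k\<in>K'. ln (Ginv k e) - ln (Lk k)) + (\<Sum>k\<in>K. ln (Rk k) - ln (Hinv k e))"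

lemma measure_tailA: assumes e: "0 < e" "e < 1"
  shows "measure muF {x \<in> AA. Farey q x \<le> e} = GG e"
proof -
  have disj: "SG e \<inter> SH e = {}"
  proof -
    have "x \<notin> SH e" if "x \<in> SG e" for x
    proof
      assume "x \<in> SH e"
      then obtain k2 where k2: "k2 \<in> K" "Hinv k2 e \<le> x" "x \<le> Rk k2" by (auto simp: SH_def)
      obtain k1 where k1: "k1 \<in> K'" "Lk k1 < x" "x \<le> Ginv k1 e" using \<open>x \<in> SG e\<close> by (auto simp: SG_def)
      have k1K: "k1 \<in> K" using k1 K'_sub by simp
      have x1: "x \<in> {Lk k1<..Mk k1}" using SG_piece[OF k1K e] k1 by auto
      have x2: "x \<in> {Mk k2<..Rk k2}" using SH_piece[OF k2(1) e] k2 by auto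
      show False
      proof (cases "k1 = k2")
        case True thus False using x1 x2 by simp
      next
        case False
        thus False using disj_LR[OF k1K k2(1) False] x1 x2 LMR[OF k1K] LMR[OF k2(1)] by auto
      qed
    qed
    thus ?thesis by blast
  qed
  have m1: "SG e \<in> sets muF" unfolding SG_def sets_muF by (intro sets.finite_UN) (auto simp: K'_def Kset_def)
  have m2: "SH e \<in> sets muF" unfolding SH_def sets_muF by (intro sets.finite_UN) (auto simp: Kset_def)
  have n1: "0 \<le> (\<Sum>k\<in>K'. ln (Ginv k e) - ln (Lk k))"
  proof (rule sum_nonneg)
    fix k assume k: "k \<in> K'"
    have kK: "k \<in> K" using k K'_sub by simp
    have "0 < Lk k" using cc_pos[OF kK K'_le[OF k]] abcK[OF kK] by (simp add: Lk_def)
    thus "0 \<le> ln (Ginv k e) - ln (Lk k)" using Ginv_gt[OF kK e(1)] by simp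
  qed
  have n2: "0 \<le> (\<Sum>k\<in>K. ln (Rk k) - ln (Hinv k e))"
  proof (rule sum_nonneg)
    fix k assume k: "k \<in> K"
    show "0 \<le> ln (Rk k) - ln (Hinv k e)" using Hinv_pos[OF k less_imp_le[OF e(1)] e(2)] Hinv_lt[OF k e(1)] by simp
  qed
  have "emeasure muF {x \<in> AA. Farey q x \<le> e} = emeasure muF (SG e) + emeasure muF (SH e)"
    unfolding set_eq[OF e] by (rule plus_emeasure[symmetric, OF m1 m2 disj])
  also have "\<dots> = ennreal (GG e)"
    unfolding emeasure_SG[OF e] emeasure_SH[OF e] GG_def using n1 n2 by simp
  finally show ?thesis using n1 n2 unfolding GG_def by (intro measure_eq_emeasure_eq_ennreal) auto
qed

end


lemma deriv_lnG: fixes a b c :: real assumes "b > 0" "c > 0" "b^2 - a*c = 1"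
  shows "((\<lambda>e. ln ((b*e + c) / (a*e + b))) has_real_derivative 1 / (b*c)) (at 0)"
proof -
  have "((\<lambda>e. ln ((b*e + c) / (a*e + b))) has_real_derivative
      ((b * (a*0 + b) - (b*0 + c) * a) / (a*0 + b)^2) / ((b*0 + c) / (a*0 + b))) (at 0)"
    using assms by (auto intro!: derivative_eq_intros simp: power2_eq_square)
  moreover have "((b * (a*0 + b) - (b*0 + c) * a) / (a*0 + b)^2) / ((b*0 + c) / (a*0 + b)) = 1 / (b*c)"
  proof -
    have h: "b * (a*0 + b) - (b*0 + c) * a = 1" using assms by (simp add: power2_eq_square algebra_simps)
    show ?thesis unfolding h using assms(1,2) by (simp add: field_simps power2_eq_square)
  qed
  ultimately show ?thesis by simp
qed



lemma deriv_lnH: fixes a b c :: real assumes "a > 0" "b > 0" "b^2 - a*c = 1"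
  shows "((\<lambda>e. ln ((c*e + b) / (b*e + a))) has_real_derivative - 1 / (a*b)) (at 0)"
proof -
  have "((\<lambda>e. ln ((c*e + b) / (b*e + a))) has_real_derivative
      ((c * (b*0 + a) - (c*0 + b) * b) / (b*0 + a)^2) / ((c*0 + b) / (b*0 + a))) (at 0)"
    using assms by (auto intro!: derivative_eq_intros simp: power2_eq_square)
  moreover have "((c * (b*0 + a) - (c*0 + b) * b) / (b*0 + a)^2) / ((c*0 + b) / (b*0 + a)) = - 1 / (a*b)"
  proof -
    have h: "c * (b*0 + a) - (c*0 + b) * b = -1" using assms by (simp add: power2_eq_square algebra_simps)
    show ?thesis unfolding h using assms(1,2) by (simp add: field_simps power2_eq_square)
  qed
  ultimately show ?thesis by simp
qed

lemma deriv_quot_lim: fixes f :: "real \<Rightarrow> real"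
  assumes "(f has_real_derivative D) (at 0)" shows "((\<lambda>e. (f e - f 0) / e) \<longlongrightarrow> D) (at_right 0)"
proof -
  have "(f has_real_derivative D) (at 0 within {0<..})" using assms by (rule has_field_derivative_at_within)
  hence "((\<lambda>y. (f y - f 0) / (y - 0)) \<longlongrightarrow> D) (at 0 within {0<..})" by (simp only: has_field_derivative_iff)
  thus ?thesis by simp
qed

context fq begin

lemma K'_eq: "K' = {k0..<q-1}" using k0_le by (auto simp: K'_def K_eq)
lemma K_eq2: "K = {k0..<q}" using k0_le q3 by (auto simp: K_eq)

lemma termG: assumes "k \<in> K'" shows "1 / (bb k * cc k) = Lk k - Lk (Suc k)"
proof -
  have kK: "k \<in> K" using assms K'_sub by simp
  have kb: "1 \<le> Suc k" "Suc k \<le> q - 1" using K_bounds[OF kK] K'_le[OF assms] q3 by auto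
  have e1: "bb (Suc k) = cc k" "aa (Suc k) = bb k" by (simp_all add: aa_def bb_def cc_def add.commute)
  have d: "cc k ^ 2 - bb k * cc (Suc k) = 1" using abc_pos(4)[OF kb] unfolding e1 .
  have p: "bb k > 0" "cc k > 0" using abcK[OF kK] cc_pos[OF kK K'_le[OF assms]] by auto
  have "Lk k - Lk (Suc k) = (cc k ^ 2 - bb k * cc (Suc k)) / (bb k * cc k)"
    unfolding Lk_def e1 using p by (simp add: field_simps power2_eq_square)
  thus ?thesis using d by simp
qed

lemma termH: assumes "k \<in> K" shows "1 / (aa k * bb k) = Rk k - Rk (Suc k)"
proof -
  have k1: "1 \<le> k" using K_bounds[OF assms] by simp
  have p: "aa k > 0" "bb k > 0" "bb k ^ 2 - aa k * cc k = 1" using abcK[OF assms] by auto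
  have "Rk k - Rk (Suc k) = (bb k ^ 2 - aa k * cc k) / (aa k * bb k)"
    unfolding Rk_Suc[OF k1] unfolding Rk_def Lk_def using p by (simp add: field_simps power2_eq_square)
  thus ?thesis using p by simp
qed

lemma Rk_q: "Rk q = 0" by (simp add: Rk_def bb_def sq_q)

lemma sum_D: "(\<Sum>k\<in>K'. 1 / (bb k * cc k)) + (\<Sum>k\<in>K. 1 / (aa k * bb k)) = l"
proof -
  have "(\<Sum>k\<in>K'. 1 / (bb k * cc k)) = (\<Sum>k\<in>K'. (- Lk (Suc k)) - (- Lk k))"
    using termG by (intro sum.cong) auto
  also have "\<dots> = Lk k0 - Lk (q - 1)" unfolding K'_eq using sum_Suc_diff'[of k0 "q-1" "\<lambda>i. - Lk i"] k0_le by simp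
  finally have s1: "(\<Sum>k\<in>K'. 1 / (bb k * cc k)) = l - 1" using Lk_k0 Lk_last by simp
  have "(\<Sum>k\<in>K. 1 / (aa k * bb k)) = (\<Sum>k\<in>K. (- Rk (Suc k)) - (- Rk k))"
    using termH by (intro sum.cong) auto
  also have "\<dots> = Rk k0 - Rk q" unfolding K_eq2 using sum_Suc_diff'[of k0 q "\<lambda>i. - Rk i"] k0_le by simp
  finally have s2: "(\<Sum>k\<in>K. 1 / (aa k * bb k)) = 1" using Rk_k0 Rk_q by simp
  show ?thesis using s1 s2 by simp
qed

lemma lim_GG: "((\<lambda>e. GG e / e) \<longlongrightarrow> l) (at_right 0)"
proof -
  have eq: "GG e / e = (\<Sum>k\<in>K'. (ln (Ginv k e) - ln (Ginv k 0)) / e) +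
      (\<Sum>k\<in>K. - ((ln (Hinv k e) - ln (Hinv k 0)) / e))" for e
  proof -
    have "Ginv k 0 = Lk k" "Hinv k 0 = Rk k" for k by (simp_all add: Ginv_def Lk_def Hinv_def Rk_def)
    thus ?thesis unfolding GG_def by (simp add: add_divide_distrib sum_divide_distrib diff_divide_distrib)
  qed
  have "((\<lambda>e. (\<Sum>k\<in>K'. (ln (Ginv k e) - ln (Ginv k 0)) / e) +
      (\<Sum>k\<in>K. - ((ln (Hinv k e) - ln (Hinv k 0)) / e))) \<longlongrightarrow>
      (\<Sum>k\<in>K'. 1 / (bb k * cc k)) + (\<Sum>k\<in>K. - (- 1 / (aa k * bb k)))) (at_right 0)"
  proof (intro tendsto_add tendsto_sum tendsto_minus)
    fix k assume k: "k \<in> K'"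
    have kK: "k \<in> K" using k K'_sub by simp
    have "((\<lambda>e. ln (Ginv k e)) has_real_derivative 1 / (bb k * cc k)) (at 0)"
      unfolding Ginv_def using deriv_lnG abcK[OF kK] cc_pos[OF kK K'_le[OF k]] by simp
    thus "((\<lambda>e. (ln (Ginv k e) - ln (Ginv k 0)) / e) \<longlongrightarrow> 1 / (bb k * cc k)) (at_right 0)"
      by (rule deriv_quot_lim)
  next
    fix k assume k: "k \<in> K"
    have "((\<lambda>e. ln (Hinv k e)) has_real_derivative - 1 / (aa k * bb k)) (at 0)"
      unfolding Hinv_def using deriv_lnH abcK[OF k] by simp
    thus "((\<lambda>e. (ln (Hinv k e) - ln (Hinv k 0)) / e) \<longlongrightarrow> - 1 / (aa k * bb k)) (at_right 0)"
      by (rule deriv_quot_lim)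
  qed
  moreover have "(\<Sum>k\<in>K'. 1 / (bb k * cc k)) + (\<Sum>k\<in>K. - (- 1 / (aa k * bb k))) = l"
    using sum_D by simp
  ultimately show ?thesis unfolding eq by simp
qed

end


context fq begin

lemma ne_eq: "n \<ge> 1 \<Longrightarrow> real n * en N n = 1 / ((1 + real N * l) * inverse (real n) + l)"
  using l_pos by (simp add: en_def field_simps add_pos_nonneg)

lemma lim_ne: "((\<lambda>n. real n * en N n) \<longlongrightarrow> 1 / l) sequentially"
proof -
  have "((\<lambda>n. 1 / ((1 + real N * l) * inverse (real n) + l)) \<longlongrightarrow> 1 / ((1 + real N * l) * 0 + l)) sequentially"
    using l_pos by (intro tendsto_intros lim_inverse_n) auto
  hence "((\<lambda>n. 1 / ((1 + real N * l) * inverse (real n) + l)) \<longlongrightarrow> 1 / l) sequentially" by simp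
  moreover have "eventually (\<lambda>n. 1 / ((1 + real N * l) * inverse (real n) + l) = real n * en N n) sequentially"
    using eventually_ge_at_top[of "1::nat"] by eventually_elim (simp add: ne_eq)
  ultimately show ?thesis by (rule Lim_transform_eventually)
qed

lemma en_lim: "filterlim (en N) (at_right 0) sequentially"
proof (rule tendsto_imp_filterlim_at_right)
  have "((\<lambda>n. inverse (real n) * (real n * en N n)) \<longlongrightarrow> 0 * (1 / l)) sequentially"
    by (intro tendsto_intros lim_inverse_n lim_ne)
  hence "((\<lambda>n. inverse (real n) * (real n * en N n)) \<longlongrightarrow> 0) sequentially" by simp
  moreover have "eventually (\<lambda>n. inverse (real n) * (real n * en N n) = en N n) sequentially"
    using eventually_ge_at_top[of "1::nat"] by eventually_elim simp
  ultimately show "(en N \<longlongrightarrow> 0) sequentially" by (rule Lim_transform_eventually)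
  show "eventually (\<lambda>n. en N n > 0) sequentially" using en_pos by simp
qed

lemma tail_eq: assumes "n \<ge> 1" shows "tail_meas (Farey q) {cN N<..1} n = GG (en N n)"
proof -
  have "en N n < 1"
  proof -
    have "1 / (l + 1) < 1" using l_pos by simp
    thus ?thesis using en_le[OF assms, of N] cN_le[of N] by linarith
  qed
  thus ?thesis unfolding tail_meas_def tail_set[OF assms] using measure_tailA en_pos by simp
qed

lemma tail_asymp: "tail_meas (Farey q) {cN N<..1} \<sim>[at_top] (\<lambda>n. 1 / real n)"
proof (rule asymp_equivI')
  have l1: "((\<lambda>n. GG (en N n) / en N n) \<longlongrightarrow> l) sequentially"
    using filterlim_compose[OF lim_GG en_lim] .
  have "((\<lambda>n. (GG (en N n) / en N n) * (real n * en N n)) \<longlongrightarrow> l * (1 / l)) sequentially"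
    by (intro tendsto_mult l1 lim_ne)
  hence l2: "((\<lambda>n. (GG (en N n) / en N n) * (real n * en N n)) \<longlongrightarrow> 1) sequentially"
    using l_pos by simp
  have "eventually (\<lambda>n. (GG (en N n) / en N n) * (real n * en N n) =
      tail_meas (Farey q) {cN N<..1} n / (1 / real n)) sequentially"
    using eventually_ge_at_top[of "1::nat"]
  proof eventually_elim
    case (elim n)
    have "en N n > 0" by (rule en_pos)
    thus ?case using tail_eq[OF elim] by simp
  qed
  thus "((\<lambda>n. tail_meas (Farey q) {cN N<..1} n / (1 / real n)) \<longlongrightarrow> 1) at_top"
    using l2 by (rule Lim_transform_eventually[rotated])
qed

lemma choose_N: assumes "m > 0" shows "\<exists>N. cN N < m"
proof -
  obtain N :: nat where N: "1 / (m * l) < real N" using reals_Archimedean2 by blast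
  have ml: "m * l > 0" using assms l_pos by simp
  hence "1 < real N * (m * l)" using N by (simp add: divide_less_eq)
  also have "\<dots> \<le> m * (1 + (real N + 1) * l)" using assms l_pos by (simp add: algebra_simps)
  finally have "1 / (1 + (real N + 1) * l) < m" using l_pos by (simp add: divide_less_eq add_pos_nonneg mult.commute)
  thus ?thesis unfolding cN_def by blast
qed

lemma Y_set: "(\<Union>k\<le>N. {x \<in> {0..1}. (Farey q ^^ k) x \<in> AA}) = {cN N<..1}"
proof -
  have "x \<in> (\<Union>k\<le>N. {x \<in> {0..1}. (Farey q ^^ k) x \<in> AA}) \<longleftrightarrow> x \<in> {cN N<..1}" for x
  proof (cases "0 \<le> x \<and> x \<le> 1")
    case True thus ?thesis using Y_char[of x N] by auto
  next
    case False thus ?thesis using cN_pos[of N] by auto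
  qed
  thus ?thesis by blast
qed

end

theorem proposition2p9:
  fixes q :: nat
  assumes "odd q" and "q \<ge> 3"
  defines "A \<equiv> {1 / (lam q + 1) <.. 1}"
  shows "tail_meas (Farey q) A \<sim>[at_top] (\<lambda>n. 1 / real n) \<and>
         (\<forall>C. compact C \<and> C \<subseteq> {0<..1} \<longrightarrow>
           (\<exists>Y N. Y \<in> sets lborel \<and> Y \<subseteq> {0<..1} \<and> C \<subseteq> Y \<and>
              Y = (\<Union>k\<le>(N::nat). {x \<in> {0..1}. (Farey q ^^ k) x \<in> A}) \<and>
              tail_meas (Farey q) Y \<sim>[at_top] (\<lambda>n. 1 / real n)))"
proof -
  interpret fq q using assms by unfold_locales
  have AA: "A = AA" by (simp add: A_def AA_def)
  have A0: "A = {cN 0<..1}" by (simp add: A_def cN_def add.commute)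
  have part1: "tail_meas (Farey q) A \<sim>[at_top] (\<lambda>n. 1 / real n)"
    unfolding A0 by (rule tail_asymp)
  have part2: "\<exists>Y N. Y \<in> sets lborel \<and> Y \<subseteq> {0<..1} \<and> C \<subseteq> Y \<and>
              Y = (\<Union>k\<le>(N::nat). {x \<in> {0..1}. (Farey q ^^ k) x \<in> A}) \<and>
              tail_meas (Farey q) Y \<sim>[at_top] (\<lambda>n. 1 / real n)"
    if C: "compact C" "C \<subseteq> {0<..1}" for C
  proof -
    obtain N where N: "C \<subseteq> {cN N<..1}"
    proof (cases "C = {}")
      case True thus ?thesis using that[of 0] by simp
    next
      case False
      then obtain m where m: "m \<in> C" "\<And>t. t \<in> C \<Longrightarrow> m \<le> t"
        using compact_attains_inf[OF C(1)] by blast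
      have "m > 0" using m C(2) by auto
      then obtain N where "cN N < m" using choose_N by blast
      thus ?thesis using that[of N] m C(2) by fastforce
    qed
    show ?thesis
    proof (intro exI conjI)
      show "{cN N<..1} = (\<Union>k\<le>N. {x \<in> {0..1}. (Farey q ^^ k) x \<in> A})" unfolding AA Y_set ..
      show "{cN N<..1} \<in> sets lborel" by simp
      show "{cN N<..1} \<subseteq> {0<..1}" using cN_pos[of N] by auto
      show "C \<subseteq> {cN N<..1}" by (rule N)
      show "tail_meas (Farey q) {cN N<..1} \<sim>[at_top] (\<lambda>n. 1 / real n)" by (rule tail_asymp)
    qed
  qed
  show ?thesis using part1 part2 by blast
qed



end
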